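(* Assume the standing hypotheses (S) with $\lambda\ge0$ hold for two time steps $\tau,\eta>0$ (with initial data $X_0^\tau,X_0^\eta\in\mathbb H$ and corresponding scheme iterates). Then for every $t\ge0$, \[d^2_{\tau,\eta}(t;t)\le\|X_0^\tau-X_0^\eta\|^2_{\mathbb H}+\frac74\Big(\tau^2\|\nabla\phi^{\#}_{\rho_0}(X_0^\tau)\|^2_{\mathbb H}+\eta^2\|\nabla\phi^{\#}_{\rho_0}(X_0^\eta)\|^2_{\mathbb H}\Big).\]
   Context: Interpolations: for a time step $\tau$ and $t\in[n\tau,(n+1)\tau)$ set $\ell_\tau(t):=(t-n\tau)/\tau$, $\underline X_t^\tau:=X_n^\tau$, $\overline X_t^\tau:=X_{n+1}^\tau$; for $\xi\in\mathbb H$, $d^2_\tau(t;\xi):=(1-\ell_\tau(t))\|\xi-\underline X_t^\tau\|^2_{\mathbb H}+\ell_\tau(t)\|\xi-\overline X_t^\tau\|^2_{\mathbb H}$; and $d^2_{\tau,\eta}(t;t):=(1-\ell_\eta(t))\,d^2_\tau(t;\underline X_t^\eta)+\ell_\eta(t)\,d^2_\tau(t;\overline X_t^\eta)$. Standing hypotheses (S): $\rho_0\in\mathcal P_2(\mathbb R^d)$; $\mathbb H=L^2(\mathbb R^d;\rho_0)$ is the Hilbert space of $\rho_0$-square-integrable maps $\mathbb R^d\to\mathbb R^d$ with $\langle\xi_1,\xi_2\rangle_{\mathbb H}=\int\langle\xi_1,\xi_2\rangle d\rho_0$; $\phi:\mathcal P_2(\mathbb R^d)\to\mathbb R$ has lift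 $\phi^{\#}_{\rho_0}(\xi):=\phi(\xi_{\#}\rho_0)$ which is Fréchet differentiable on $\mathbb H$ (gradient $\nabla\phi^{\#}_{\rho_0}$), $\lambda$-convex on $\mathbb H$ for some $\lambda\in\mathbb R$ (i.e. $\phi^{\#}_{\rho_0}((1-t)\xi_1+t\xi_2)\le(1-t)\phi^{\#}_{\rho_0}(\xi_1)+t\phi^{\#}_{\rho_0}(\xi_2)-\frac\lambda2t(1-t)\|\xi_1-\xi_2\|_{\mathbb H}^2$), and $\inf_{\mathbb H}\phi^{\#}_{\rho_0}>-\infty$; the time step $\tau>0$ satisfies $\lambda/2+1/\tau>0$; $X_0^\tau\in\mathbb H$. Lagrangian trapezoidal scheme: $X_{n+1}^\tau$ is the (unique) minimizer over $\xi\in\mathbb H$ of $\tfrac12\phi^{\#}_{\rho_0}(\xi)+\tfrac12\langle\nabla\phi^{\#}_{\rho_0}(X_n^\tau),\xi\rangle_{\mathbb H}+\tfrac1{2\tau}\|\xi-X_n^\tau\|^2_{\mathbb H}$; equivalently $X_{n+1}^\tau=X_n^\tau-\frac\tau2\big(\nabla\phi^{\#}_{\rho_0}(X_{n+1}^\tau)+\nabla\phi^{\#}_{\rho_0}(X_n^\tau)\big)$. *)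

theory Defs
  imports "HOL-Probability.Probability"
begin

definition P2 :: "('a::euclidean_space) measure set" where
  "P2 = {\<mu>. prob_space \<mu> \<and> sets \<mu> = sets borel \<and> integrable \<mu> (\<lambda>x. (norm x)^2)}"

text \<open>The Hilbert space H = L^2(R^d; rho0) of rho0-square-integrable maps
  (represented by functions; all quantities below are invariant under
  rho0-a.e. equality).\<close>
definition L2H :: "'a measure \<Rightarrow> ('a \<Rightarrow> 'b::euclidean_space) set" where
  "L2H M = {\<xi>. \<xi> \<in> borel_measurable M \<and> integrable M (\<lambda>x. (norm (\<xi> x))^2)}"

definition innerH :: "'a measure \<Rightarrow> ('a \<Rightarrow> 'b::euclidean_space) \<Rightarrow> ('a \<Rightarrow> 'b) \<Rightarrow> real" where
  "innerH M \<xi> \<zeta> = (LINT x|M. inner (\<xi> x) (\<zeta> x))"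

definition normH :: "'a measure \<Rightarrow> ('a \<Rightarrow> 'b::euclidean_space) \<Rightarrow> real" where
  "normH M \<xi> = sqrt (LINT x|M. (norm (\<xi> x))^2)"

definition distH :: "'a measure \<Rightarrow> ('a \<Rightarrow> 'b::euclidean_space) \<Rightarrow> ('a \<Rightarrow> 'b) \<Rightarrow> real" where
  "distH M \<xi> \<zeta> = normH M (\<lambda>x. \<xi> x - \<zeta> x)"

definition lift :: "('a::euclidean_space measure \<Rightarrow> real) \<Rightarrow> 'a measure \<Rightarrow> ('a \<Rightarrow> 'a) \<Rightarrow> real" where
  "lift \<phi> \<rho>0 \<xi> = \<phi> (distr \<rho>0 borel \<xi>)"

definition frechet_gradH :: "'a measure \<Rightarrow> (('a \<Rightarrow> 'b::euclidean_space) \<Rightarrow> real)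
    \<Rightarrow> (('a \<Rightarrow> 'b) \<Rightarrow> ('a \<Rightarrow> 'b)) \<Rightarrow> bool" where
  "frechet_gradH M F G \<longleftrightarrow>
     (\<forall>\<xi>\<in>L2H M. G \<xi> \<in> L2H M \<and>
        (\<forall>\<epsilon>>0. \<exists>\<delta>>0. \<forall>\<zeta>\<in>L2H M. distH M \<zeta> \<xi> < \<delta> \<longrightarrow>
            \<bar>F \<zeta> - F \<xi> - innerH M (G \<xi>) (\<lambda>x. \<zeta> x - \<xi> x)\<bar> \<le> \<epsilon> * distH M \<zeta> \<xi>))"

definition lambda_convexH :: "'a measure \<Rightarrow> real \<Rightarrow> (('a \<Rightarrow> 'b::euclidean_space) \<Rightarrow> real) \<Rightarrow> bool" where
  "lambda_convexH M lam F \<longleftrightarrow>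
     (\<forall>\<xi>1\<in>L2H M. \<forall>\<xi>2\<in>L2H M. \<forall>t\<in>{0..1::real}.
        F (\<lambda>x. (1 - t) *\<^sub>R \<xi>1 x + t *\<^sub>R \<xi>2 x)
          \<le> (1 - t) * F \<xi>1 + t * F \<xi>2 - lam / 2 * t * (1 - t) * (distH M \<xi>1 \<xi>2)^2)"

definition trap_scheme :: "'a measure \<Rightarrow> (('a \<Rightarrow> 'b::euclidean_space) \<Rightarrow> real)
    \<Rightarrow> (('a \<Rightarrow> 'b) \<Rightarrow> ('a \<Rightarrow> 'b)) \<Rightarrow> real \<Rightarrow> (nat \<Rightarrow> 'a \<Rightarrow> 'b) \<Rightarrow> bool" where
  "trap_scheme M F G \<tau> X \<longleftrightarrow>
     X 0 \<in> L2H M \<and>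
     (\<forall>n. X (Suc n) \<in> L2H M \<and>
        (\<forall>\<xi>\<in>L2H M.
           F (X (Suc n)) / 2 + innerH M (G (X n)) (X (Suc n)) / 2 + (distH M (X (Suc n)) (X n))^2 / (2 * \<tau>)
           \<le> F \<xi> / 2 + innerH M (G (X n)) \<xi> / 2 + (distH M \<xi> (X n))^2 / (2 * \<tau>)))"

definition stepidx :: "real \<Rightarrow> real \<Rightarrow> nat" where
  "stepidx \<tau> t = nat \<lfloor>t / \<tau>\<rfloor>"

definition ell :: "real \<Rightarrow> real \<Rightarrow> real" where
  "ell \<tau> t = (t - real (stepidx \<tau> t) * \<tau>) / \<tau>"

definition lowerX :: "(nat \<Rightarrow> 'c) \<Rightarrow> real \<Rightarrow> real \<Rightarrow> 'c" where
  "lowerX X \<tau> t = X (stepidx \<tau> t)"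

definition upperX :: "(nat \<Rightarrow> 'c) \<Rightarrow> real \<Rightarrow> real \<Rightarrow> 'c" where
  "upperX X \<tau> t = X (Suc (stepidx \<tau> t))"

definition d2 :: "'a measure \<Rightarrow> (nat \<Rightarrow> 'a \<Rightarrow> 'b::euclidean_space) \<Rightarrow> real \<Rightarrow> real \<Rightarrow> ('a \<Rightarrow> 'b) \<Rightarrow> real" where
  "d2 M X \<tau> t \<xi> = (1 - ell \<tau> t) * (distH M \<xi> (lowerX X \<tau> t))^2
                   + ell \<tau> t * (distH M \<xi> (upperX X \<tau> t))^2"

definition d2_two :: "'a measure \<Rightarrow> (nat \<Rightarrow> 'a \<Rightarrow> 'b::euclidean_space) \<Rightarrow> real
    \<Rightarrow> (nat \<Rightarrow> 'a \<Rightarrow> 'b) \<Rightarrow> real \<Rightarrow> real \<Rightarrow> real" where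
  "d2_two M X \<tau> Y \<eta> t = (1 - ell \<eta> t) * d2 M X \<tau> t (lowerX Y \<eta> t)
                          + ell \<eta> t * d2 M X \<tau> t (upperX Y \<eta> t)"

end

theory Submission
  imports Defs
begin


definition Dq :: "real \<Rightarrow> real \<Rightarrow> real \<Rightarrow> real \<Rightarrow> real \<Rightarrow> real \<Rightarrow> real" where
  "Dq c00 c10 c01 c11 a b = (1-b)*((1-a)*c00+a*c10)+b*((1-a)*c01+a*c11)"
definition Pq :: "real \<Rightarrow> real \<Rightarrow> real \<Rightarrow> real \<Rightarrow> real \<Rightarrow> real \<Rightarrow> real \<Rightarrow> real" where
  "Pq t f0 f1 G g0 g1 a = t*a*(1-a)*(f0-f1)+t^2/4*(G-(1-a)*g0-a*g1)"

lemma rect_mono: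
  fixes t e d a0 b0 c00 c10 c01 c11 fx0 fx1 fy0 fy1 gx0 gx1 gy0 gy1 GX GY :: real
  assumes t: "t > 0" and e: "e > 0" and d: "d \<ge> 0"
    and a: "0 \<le> a0" "a0 + d/t \<le> 1" and b: "0 \<le> b0" "b0 + d/e \<le> 1"
    and h1: "c10 - c00 \<le> t*(2*fy0-fx0-fx1)-t^2/4*(gx1-gx0)"
    and h2: "c11 - c01 \<le> t*(2*fy1-fx0-fx1)-t^2/4*(gx1-gx0)"
    and h3: "c01 - c00 \<le> e*(2*fx0-fy0-fy1)-e^2/4*(gy1-gy0)"
    and h4: "c11 - c10 \<le> e*(2*fx1-fy0-fy1)-e^2/4*(gy1-gy0)"
  shows "Dq c00 c10 c01 c11 (a0+d/t) (b0+d/e) - Pq t fx0 fx1 GX gx0 gx1 (a0+d/t) - Pq e fy0 fy1 GY gy0 gy1 (b0+d/e)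
     \<le> Dq c00 c10 c01 c11 a0 b0 - Pq t fx0 fx1 GX gx0 gx1 a0 - Pq e fy0 fy1 GY gy0 gy1 b0"
proof -
  define ab where "ab = a0 + d/(2*t)"
  define bb where "bb = b0 + d/(2*e)"
  define B0 where "B0 = t*(2*fy0-fx0-fx1)-t^2/4*(gx1-gx0)"
  define B1 where "B1 = t*(2*fy1-fx0-fx1)-t^2/4*(gx1-gx0)"
  define C0 where "C0 = e*(2*fx0-fy0-fy1)-e^2/4*(gy1-gy0)"
  define C1 where "C1 = e*(2*fx1-fy0-fy1)-e^2/4*(gy1-gy0)"
  have id: "(Dq c00 c10 c01 c11 a0 b0 - Pq t fx0 fx1 GX gx0 gx1 a0 - Pq e fy0 fy1 GY gy0 gy1 b0)
     - (Dq c00 c10 c01 c11 (a0+d/t) (b0+d/e) - Pq t fx0 fx1 GX gx0 gx1 (a0+d/t) - Pq e fy0 fy1 GY gy0 gy1 (b0+d/e))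
     = (d/t)*(1-bb)*(B0-(c10-c00))+(d/t)*bb*(B1-(c11-c01))+(d/e)*(1-ab)*(C0-(c01-c00))+(d/e)*ab*(C1-(c11-c10))"
    using t e unfolding Dq_def Pq_def ab_def bb_def B0_def B1_def C0_def C1_def
    by (simp add: field_simps power2_eq_square)
  have dt: "d/t \<ge> 0" "d/e \<ge> 0" using t e d by auto
  have "d/(2*t) \<le> d/t" using t d by (simp add: frac_le)
  hence abr: "0 \<le> ab" "ab \<le> 1" using a dt unfolding ab_def by auto
  have "d/(2*e) \<le> d/e" using e d by (simp add: frac_le)
  hence bbr: "0 \<le> bb" "bb \<le> 1" using b dt unfolding bb_def by auto
  have "0 \<le> (d/t)*(1-bb)*(B0-(c10-c00))" using dt bbr h1 unfolding B0_def by (intro mult_nonneg_nonneg) auto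
  moreover have "0 \<le> (d/t)*bb*(B1-(c11-c01))" using dt bbr h2 unfolding B1_def by (intro mult_nonneg_nonneg) auto
  moreover have "0 \<le> (d/e)*(1-ab)*(C0-(c01-c00))" using dt abr h3 unfolding C0_def by (intro mult_nonneg_nonneg) auto
  moreover have "0 \<le> (d/e)*ab*(C1-(c11-c10))" using dt abr h4 unfolding C1_def by (intro mult_nonneg_nonneg) auto
  ultimately show ?thesis using id by linarith
qed


locale chainctx =
  fixes t e :: real and c :: "nat \<Rightarrow> nat \<Rightarrow> real" and FX FY GX GY :: "nat \<Rightarrow> real"
  assumes t: "t > 0" and e: "e > 0"
    and hA: "\<And>n m. c (Suc n) m - c n m \<le> t*(2*FY m - FX n - FX (Suc n)) - t^2/4*(GX (Suc n) - GX n)"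
    and hB: "\<And>n m. c n (Suc m) - c n m \<le> e*(2*FX n - FY m - FY (Suc m)) - e^2/4*(GY (Suc m) - GY m)"
begin

definition Phi :: "nat \<Rightarrow> nat \<Rightarrow> real \<Rightarrow> real" where
  "Phi n m s = Dq (c n m) (c (Suc n) m) (c n (Suc m)) (c (Suc n) (Suc m)) ((s - real n * t)/t) ((s - real m * e)/e)
     - Pq t (FX n) (FX (Suc n)) (GX 0) (GX n) (GX (Suc n)) ((s - real n * t)/t)
     - Pq e (FY m) (FY (Suc m)) (GY 0) (GY m) (GY (Suc m)) ((s - real m * e)/e)"

definition Seg :: "nat \<Rightarrow> nat \<Rightarrow> real \<Rightarrow> bool" where
  "Seg n m s \<longleftrightarrow> real n * t \<le> s \<and> s \<le> (real n + 1) * t \<and> real m * e \<le> s \<and> s \<le> (real m + 1) * e"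

lemma Phi_mono:
  assumes "Seg n m s0" "Seg n m s1" "s0 \<le> s1"
  shows "Phi n m s1 \<le> Phi n m s0"
proof -
  define d where "d = s1 - s0"
  have a1: "(s1 - real n * t)/t = (s0 - real n * t)/t + d/t" using t unfolding d_def by (simp add: field_simps)
  have b1: "(s1 - real m * e)/e = (s0 - real m * e)/e + d/e" using e unfolding d_def by (simp add: field_simps)
  have r1: "0 \<le> (s0 - real n * t)/t" "(s0 - real n * t)/t + d/t \<le> 1"
    using assms t unfolding Seg_def d_def by (auto simp: field_simps)
  have r2: "0 \<le> (s0 - real m * e)/e" "(s0 - real m * e)/e + d/e \<le> 1"
    using assms e unfolding Seg_def d_def by (auto simp: field_simps)
  show ?thesis unfolding Phi_def a1 b1
    apply (rule rect_mono[OF t e _ r1 r2])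
    using assms hA hB unfolding d_def by auto
qed

lemma Phi_contX: "Phi (Suc n) m ((real n + 1) * t) = Phi n m ((real n + 1) * t)"
  using t unfolding Phi_def Dq_def Pq_def by (simp add: field_simps)

lemma Phi_contY: "Phi n (Suc m) ((real m + 1) * e) = Phi n m ((real m + 1) * e)"
  using e unfolding Phi_def Dq_def Pq_def by (simp add: field_simps)

lemma Phi_00: "Phi 0 0 0 = c 0 0"
  unfolding Phi_def Dq_def Pq_def by simp

lemma Phi_le: "Seg n m s \<Longrightarrow> Phi n m s \<le> c 0 0"
proof (induction "n + m" arbitrary: n m s rule: less_induct)
  case less
  define s0 where "s0 = max (real n * t) (real m * e)"
  have seg0: "Seg n m s0" "s0 \<le> s" using less.prems unfolding Seg_def s0_def by auto
  have step: "Phi n m s \<le> Phi n m s0" by (rule Phi_mono[OF seg0(1) less.prems seg0(2)])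
  show ?case
  proof (cases "n = 0 \<and> m = 0")
    case True
    then have "s0 = 0" unfolding s0_def by simp
    then show ?thesis using step Phi_00 True by simp
  next
    case False
    show ?thesis
    proof (cases "real m * e \<le> real n * t")
      case True
      have "n \<noteq> 0"
      proof
        assume "n = 0"
        then have "real m * e \<le> 0" using True by simp
        then have "m = 0" using e by (simp add: mult_le_0_iff)
        then show False using False \<open>n = 0\<close> by simp
      qed
      then obtain k where k: "n = Suc k" by (cases n) auto
      have s0v: "s0 = (real k + 1) * t" using True k unfolding s0_def by (simp add: algebra_simps)
      have "Seg k m s0" using seg0 less.prems s0v t unfolding Seg_def s0_def k by (auto simp: algebra_simps)
      then have "Phi k m s0 \<le> c 0 0" using less.hyps[of k m] k by simp
      moreover have "Phi n m s0 = Phi k m s0" using Phi_contX[of k m] k s0v by simp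
      ultimately show ?thesis using step by simp
    next
      case False2: False
      have "m \<noteq> 0"
      proof
        assume "m = 0"
        then show False using False2 t by simp
      qed
      then obtain k where k: "m = Suc k" by (cases m) auto
      have s0v: "s0 = (real k + 1) * e" using False2 k unfolding s0_def by (simp add: algebra_simps)
      have "Seg n k s0" using seg0 less.prems s0v e unfolding Seg_def s0_def k by (auto simp: algebra_simps)
      then have "Phi n k s0 \<le> c 0 0" using less.hyps[of n k] k by simp
      moreover have "Phi n m s0 = Phi n k s0" using Phi_contY[of n k] k s0v by simp
      ultimately show ?thesis using step by simp
    qed
  qed
qed

lemma Seg_floor:
  assumes "s \<ge> 0"
  shows "Seg (nat \<lfloor>s/t\<rfloor>) (nat \<lfloor>s/e\<rfloor>) s"
proof -
  have fl: "\<And>u::real. u > 0 \<Longrightarrow> real (nat \<lfloor>s/u\<rfloor>) * u \<le> s \<and> s \<le> (real (nat \<lfloor>s/u\<rfloor>) + 1) * u"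
  proof -
    fix u :: real assume u: "u > 0"
    have q: "s/u \<ge> 0" using assms u by simp
    have r: "real (nat \<lfloor>s/u\<rfloor>) = of_int \<lfloor>s/u\<rfloor>" using q by simp
    have h1: "of_int \<lfloor>s/u\<rfloor> \<le> s/u" "s/u < of_int \<lfloor>s/u\<rfloor> + 1" by linarith+
    have "of_int \<lfloor>s/u\<rfloor> * u \<le> s" using h1(1) pos_le_divide_eq[OF u] by blast
    moreover have "s < (of_int \<lfloor>s/u\<rfloor> + 1) * u" using h1(2) pos_divide_less_eq[OF u] by blast
    ultimately show "real (nat \<lfloor>s/u\<rfloor>) * u \<le> s \<and> s \<le> (real (nat \<lfloor>s/u\<rfloor>) + 1) * u"
      unfolding r by simp
  qed
  show ?thesis unfolding Seg_def using fl[OF t] fl[OF e] by auto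
qed

end

lemma Pq_bound:
  fixes t f0 f1 G g0 g1 a :: real
  assumes "t > 0" "0 \<le> a" "a \<le> 1" "f0 - f1 \<le> t * g0" "0 \<le> g0" "g0 \<le> G" "0 \<le> g1"
  shows "Pq t f0 f1 G g0 g1 a \<le> t^2/2 * G"
proof -
  have "0 \<le> (2*a-1)^2" by simp
  have a1: "0 \<le> a*(1-a)" using assms by (intro mult_nonneg_nonneg) auto
  have a2: "a*(1-a) \<le> 1/4" using \<open>0 \<le> (2*a-1)^2\<close> by (simp add: algebra_simps power2_eq_square)
  note a1 = a1 a2
  have "t*a*(1-a)*(f0-f1) \<le> t*a*(1-a)*(t*g0)"
    using assms a1 by (simp add: mult_left_mono mult.assoc)
  also have "\<dots> = t^2 * g0 * (a*(1-a))" by (simp add: power2_eq_square algebra_simps)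
  also have "\<dots> \<le> t^2 * g0 * (1/4)" using a1 assms by (intro mult_left_mono) auto
  also have "\<dots> \<le> t^2/4 * G" using assms by (simp add: power2_eq_square mult_left_mono)
  finally have 1: "t*a*(1-a)*(f0-f1) \<le> t^2/4 * G" .
  have "0 \<le> (1-a)*g0 + a*g1" using assms by simp
  then have "0 \<le> t^2/4*((1-a)*g0 + a*g1)" by simp
  moreover have "t^2/4*(G-(1-a)*g0-a*g1) = t^2/4*G - t^2/4*((1-a)*g0 + a*g1)" by (simp add: field_simps)
  ultimately have 2: "t^2/4*(G-(1-a)*g0-a*g1) \<le> t^2/4 * G" by linarith
  show ?thesis unfolding Pq_def using 1 2 by simp
qed




lemma L2H_D: "a \<in> L2H M \<Longrightarrow> a \<in> borel_measurable M" "a \<in> L2H M \<Longrightarrow> integrable M (\<lambda>x. (norm (a x))^2)"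
  unfolding L2H_def by auto

lemma L2H_inner_integrable:
  assumes "a \<in> L2H M" "b \<in> L2H M"
  shows "integrable M (\<lambda>x. inner (a x) (b x))"
proof (rule Bochner_Integration.integrable_bound)
  show "integrable M (\<lambda>x. (norm (a x))^2 + (norm (b x))^2)"
    using assms by (intro Bochner_Integration.integrable_add) (auto simp: L2H_def)
  show "(\<lambda>x. inner (a x) (b x)) \<in> borel_measurable M"
    using assms by (intro borel_measurable_inner) (auto simp: L2H_def)
  show "AE x in M. norm (inner (a x) (b x)) \<le> norm ((norm (a x))^2 + (norm (b x))^2)"
  proof (rule AE_I2)
    fix x
    have "\<bar>inner (a x) (b x)\<bar> \<le> norm (a x) * norm (b x)" by (rule Cauchy_Schwarz_ineq2)
    also have "\<dots> \<le> (norm (a x))^2 + (norm (b x))^2"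
      by (smt (verit, best) norm_ge_zero power2_eq_square mult_mono sum_squares_bound)
    finally show "norm (inner (a x) (b x)) \<le> norm ((norm (a x))^2 + (norm (b x))^2)" by simp
  qed
qed

lemma L2H_add[simp, intro]:
  assumes "a \<in> L2H M" "b \<in> L2H M"
  shows "(\<lambda>x. a x + b x) \<in> L2H M"
proof -
  have "integrable M (\<lambda>x. inner (a x) (a x) + 2 * inner (a x) (b x) + inner (b x) (b x))"
    using assms L2H_inner_integrable by (intro Bochner_Integration.integrable_add integrable_mult_right) auto
  moreover have "(\<lambda>x. inner (a x) (a x) + 2 * inner (a x) (b x) + inner (b x) (b x)) = (\<lambda>x. (norm (a x + b x))^2)"
    by (auto simp: power2_norm_eq_inner inner_add_left inner_add_right inner_commute)
  ultimately show ?thesis using assms unfolding L2H_def by auto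
qed

lemma L2H_scale[simp, intro]:
  assumes "a \<in> L2H M"
  shows "(\<lambda>x. r *\<^sub>R a x) \<in> L2H M"
proof -
  have "integrable M (\<lambda>x. r^2 * (norm (a x))^2)" using assms unfolding L2H_def by auto
  moreover have "(\<lambda>x. r^2 * (norm (a x))^2) = (\<lambda>x. (norm (r *\<^sub>R a x))^2)"
    by (auto simp: power_mult_distrib)
  ultimately show ?thesis using assms unfolding L2H_def by auto
qed

lemma L2H_minus[simp, intro]:
  assumes "a \<in> L2H M" "b \<in> L2H M"
  shows "(\<lambda>x. a x - b x) \<in> L2H M"
proof -
  have e: "(\<lambda>x. a x - b x) = (\<lambda>x. a x + (-1) *\<^sub>R b x)" by simp
  show ?thesis unfolding e using assms by (intro L2H_add L2H_scale)
qed

lemma innerH_commute: "innerH M a b = innerH M b a"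
  unfolding innerH_def by (simp add: inner_commute)

lemma innerH_add_left[simp]:
  "a \<in> L2H M \<Longrightarrow> b \<in> L2H M \<Longrightarrow> c \<in> L2H M \<Longrightarrow> innerH M (\<lambda>x. a x + b x) c = innerH M a c + innerH M b c"
  unfolding innerH_def by (simp add: inner_add_left L2H_inner_integrable)

lemma innerH_add_right[simp]:
  "a \<in> L2H M \<Longrightarrow> b \<in> L2H M \<Longrightarrow> c \<in> L2H M \<Longrightarrow> innerH M c (\<lambda>x. a x + b x) = innerH M c a + innerH M c b"
  unfolding innerH_def by (simp add: inner_add_right L2H_inner_integrable)

lemma innerH_diff_left[simp]:
  "a \<in> L2H M \<Longrightarrow> b \<in> L2H M \<Longrightarrow> c \<in> L2H M \<Longrightarrow> innerH M (\<lambda>x. a x - b x) c = innerH M a c - innerH M b c"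
  unfolding innerH_def by (simp add: inner_diff_left L2H_inner_integrable)

lemma innerH_diff_right[simp]:
  "a \<in> L2H M \<Longrightarrow> b \<in> L2H M \<Longrightarrow> c \<in> L2H M \<Longrightarrow> innerH M c (\<lambda>x. a x - b x) = innerH M c a - innerH M c b"
  unfolding innerH_def by (simp add: inner_diff_right L2H_inner_integrable)

lemma innerH_scale_left[simp]: "innerH M (\<lambda>x. r *\<^sub>R a x) c = r * innerH M a c"
  unfolding innerH_def by simp

lemma innerH_scale_right[simp]: "innerH M c (\<lambda>x. r *\<^sub>R a x) = r * innerH M c a"
  unfolding innerH_def by simp

lemma innerH_self_nonneg: "innerH M a a \<ge> 0"
  unfolding innerH_def by (simp add: Bochner_Integration.integral_nonneg)

lemma normH_sq: "(normH M a)^2 = innerH M a a"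
proof -
  have "(LINT x|M. (norm (a x))^2) \<ge> 0" by (simp add: Bochner_Integration.integral_nonneg)
  then show ?thesis unfolding normH_def innerH_def by (simp add: power2_norm_eq_inner)
qed

lemma distH_sq: "(distH M a b)^2 = innerH M (\<lambda>x. a x - b x) (\<lambda>x. a x - b x)"
  unfolding distH_def by (rule normH_sq)

lemma distH_commute: "distH M a b = distH M b a"
  unfolding distH_def normH_def by (simp add: norm_minus_commute)

lemma normH_scale: "normH M (\<lambda>x. r *\<^sub>R a x) = \<bar>r\<bar> * normH M a"
  unfolding normH_def by (simp add: power_mult_distrib real_sqrt_mult)

lemma normH_nonneg: "normH M a \<ge> 0"
  unfolding normH_def by simp


lemma frechet_L2H: "frechet_gradH M F G \<Longrightarrow> a \<in> L2H M \<Longrightarrow> G a \<in> L2H M"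
  unfolding frechet_gradH_def by auto

lemma grad_ineq:
  assumes fg: "frechet_gradH M F G" and cv: "lambda_convexH M lam F" and lam: "lam \<ge> 0"
    and xi: "\<xi> \<in> L2H M" and ze: "\<zeta> \<in> L2H M"
  shows "F \<xi> + innerH M (G \<xi>) \<zeta> - innerH M (G \<xi>) \<xi> \<le> F \<zeta>"
proof (rule ccontr)
  assume neg: "\<not> (F \<xi> + innerH M (G \<xi>) \<zeta> - innerH M (G \<xi>) \<xi> \<le> F \<zeta>)"
  define p where "p = innerH M (G \<xi>) \<zeta> - innerH M (G \<xi>) \<xi>"
  define e where "e = F \<xi> + p - F \<zeta>"
  have e0: "e > 0" using neg unfolding e_def p_def by simp
  define dz where "dz = distH M \<zeta> \<xi>"
  have dz0: "dz \<ge> 0" unfolding dz_def distH_def by (rule normH_nonneg)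
  define \<epsilon> where "\<epsilon> = e / (2 * (dz + 1))"
  have \<epsilon>0: "\<epsilon> > 0" using e0 dz0 unfolding \<epsilon>_def by simp
  have Gxi: "G \<xi> \<in> L2H M" using fg xi by (rule frechet_L2H)
  obtain \<delta> where \<delta>0: "\<delta> > 0" and fr: "\<And>z. z \<in> L2H M \<Longrightarrow> distH M z \<xi> < \<delta> \<Longrightarrow>
       \<bar>F z - F \<xi> - innerH M (G \<xi>) (\<lambda>x. z x - \<xi> x)\<bar> \<le> \<epsilon> * distH M z \<xi>"
    using fg xi \<epsilon>0 unfolding frechet_gradH_def by blast
  define s where "s = min 1 (\<delta> / (2 * (dz + 1)))"
  have s0: "s > 0" "s \<le> 1" using \<delta>0 dz0 unfolding s_def by auto
  define w where "w = (\<lambda>x. (1 - s) *\<^sub>R \<xi> x + s *\<^sub>R \<zeta> x)"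
  have wL: "w \<in> L2H M" unfolding w_def using xi ze by auto
  have wd: "(\<lambda>x. w x - \<xi> x) = (\<lambda>x. s *\<^sub>R (\<zeta> x - \<xi> x))"
    unfolding w_def by (auto simp: algebra_simps)
  have dw: "distH M w \<xi> = s * dz"
    unfolding distH_def wd normH_scale dz_def using s0 by simp
  have "s * dz \<le> \<delta> / (2 * (dz + 1)) * dz" using s0 dz0 unfolding s_def by (intro mult_right_mono) auto
  also have "\<dots> < \<delta>" using \<delta>0 dz0 by (simp add: field_simps) (smt (verit, best) mult_nonneg_nonneg)
  finally have "distH M w \<xi> < \<delta>" using dw by simp
  from fr[OF wL this] have "\<bar>F w - F \<xi> - innerH M (G \<xi>) (\<lambda>x. w x - \<xi> x)\<bar> \<le> \<epsilon> * (s * dz)"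
    using dw by simp
  moreover have "innerH M (G \<xi>) (\<lambda>x. w x - \<xi> x) = s * p"
    unfolding wd p_def using xi ze Gxi by simp
  ultimately have lo: "F \<xi> + s * p - \<epsilon> * (s * dz) \<le> F w" by linarith
  have "F w \<le> (1 - s) * F \<xi> + s * F \<zeta> - lam / 2 * s * (1 - s) * (distH M \<xi> \<zeta>)^2"
    using cv xi ze s0 unfolding lambda_convexH_def w_def by auto
  moreover have "0 \<le> lam / 2 * s * (1 - s) * (distH M \<xi> \<zeta>)^2" using lam s0 by simp
  ultimately have up: "F w \<le> (1 - s) * F \<xi> + s * F \<zeta>" by linarith
  from lo up have "s * e \<le> s * (\<epsilon> * dz)" unfolding e_def by (simp add: algebra_simps)
  then have "e \<le> \<epsilon> * dz" using s0 by simp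
  also have "\<epsilon> * dz < e" using e0 dz0 unfolding \<epsilon>_def by (simp add: field_simps) (smt (verit, best) mult_nonneg_nonneg)
  finally show False by simp
qed

lemma quad_zero:
  fixes p q :: real
  assumes q: "q \<ge> 0" and h: "0 \<le> 2 * r * p + r^2 * q" and r: "r = - p / (q + 1)"
  shows "p = 0"
proof -
  have "0 \<le> (2 * r * p + r^2 * q) * (q+1)^2" using h by simp
  also have "\<dots> = 2*p*(r*(q+1))*(q+1) + (r*(q+1))^2*q" by (simp add: power2_eq_square algebra_simps)
  also have "r*(q+1) = -p" using q unfolding r by simp
  also have "2*p*(-p)*(q+1) + (-p)^2*q = -(p^2 * (q + 2))" by (simp add: power2_eq_square algebra_simps)
  finally have "p^2 * (q + 2) \<le> 0" by simp
  moreover have "q + 2 > 0" using q by simp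
  ultimately have "p^2 \<le> 0" by (simp add: mult_le_0_iff)
  then show ?thesis by simp
qed

lemma EL:
  assumes fg: "frechet_gradH M F G" and ts: "trap_scheme M F G \<tau> X" and \<tau>: "\<tau> > 0"
    and wL: "w \<in> L2H M"
  shows "innerH M (X (Suc n)) w - innerH M (X n) w = -(\<tau>/2) * (innerH M (G (X (Suc n))) w + innerH M (G (X n)) w)"
proof -
  define x1 where "x1 = X (Suc n)"
  define x0 where "x0 = X n"
  have x1L: "x1 \<in> L2H M" and x0L: "x0 \<in> L2H M" using ts unfolding trap_scheme_def x1_def x0_def
    by (metis not0_implies_Suc)+
  define g1 where "g1 = G x1"
  define g0 where "g0 = G x0"
  have g1L: "g1 \<in> L2H M" and g0L: "g0 \<in> L2H M" using fg x1L x0L frechet_L2H unfolding g1_def g0_def by auto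
  define u where "u = (\<lambda>x. x1 x - x0 x)"
  have uL: "u \<in> L2H M" unfolding u_def using x1L x0L by auto
  define v where "v = (\<lambda>x. (1/2) *\<^sub>R g1 x + (1/2) *\<^sub>R g0 x + (1/\<tau>) *\<^sub>R u x)"
  have vL: "v \<in> L2H M" unfolding v_def using g1L g0L uL by auto
  have vexp: "\<And>z. z \<in> L2H M \<Longrightarrow> innerH M v z = innerH M g1 z / 2 + innerH M g0 z / 2 + innerH M u z / \<tau>"
    unfolding v_def using g1L g0L uL by simp
  define N where "N = innerH M v v"
  have N0: "N \<ge> 0" unfolding N_def by (rule innerH_self_nonneg)
  have NZ: "N = 0"
  proof (rule ccontr)
    assume "N \<noteq> 0"
    then have Np: "N > 0" using N0 by simp
    define nv where "nv = normH M v"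
    have nvN: "nv^2 = N" unfolding nv_def N_def by (rule normH_sq)
    have nv0: "nv > 0" using nvN Np normH_nonneg[of M v] unfolding nv_def
      by (metis less_eq_real_def power_zero_numeral zero_less_numeral)
    obtain \<delta> where \<delta>0: "\<delta> > 0" and fr: "\<And>z. z \<in> L2H M \<Longrightarrow> distH M z x1 < \<delta> \<Longrightarrow>
       \<bar>F z - F x1 - innerH M (G x1) (\<lambda>x. z x - x1 x)\<bar> \<le> nv * distH M z x1"
      using fg x1L nv0 unfolding frechet_gradH_def by blast
    define s where "s = min (\<tau>/2) (\<delta> / (2 * nv))"
    have s0: "s > 0" "s \<le> \<tau>/2" using \<delta>0 nv0 \<tau> unfolding s_def by auto
    have snv: "s * nv < \<delta>"
    proof -
      have "s * nv \<le> \<delta> / (2 * nv) * nv" using nv0 unfolding s_def by (intro mult_right_mono) auto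
      also have "\<dots> < \<delta>" using nv0 \<delta>0 by simp
      finally show ?thesis .
    qed
    define z where "z = (\<lambda>x. x1 x - s *\<^sub>R v x)"
    have zL: "z \<in> L2H M" unfolding z_def using x1L vL by auto
    have zd: "(\<lambda>x. z x - x1 x) = (\<lambda>x. (-s) *\<^sub>R v x)" unfolding z_def by auto
    have dz: "distH M z x1 = s * nv" unfolding distH_def zd normH_scale nv_def using s0 by simp
    from fr[OF zL] dz snv have "\<bar>F z - F x1 - innerH M g1 (\<lambda>x. z x - x1 x)\<bar> \<le> nv * (s * nv)"
      unfolding g1_def by simp
    moreover have "innerH M g1 (\<lambda>x. z x - x1 x) = - s * innerH M g1 v" unfolding zd innerH_scale_right by simp
    moreover have "nv * (s * nv) = s * N" using nvN by (simp add: power2_eq_square)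
    ultimately have Fz: "F z \<le> F x1 - s * innerH M g1 v + s * N" by linarith
    have mn: "F x1 / 2 + innerH M g0 x1 / 2 + (distH M x1 x0)^2 / (2 * \<tau>)
           \<le> F z / 2 + innerH M g0 z / 2 + (distH M z x0)^2 / (2 * \<tau>)"
      using ts zL unfolding trap_scheme_def x1_def x0_def g0_def by blast
    have gz: "innerH M g0 z = innerH M g0 x1 - s * innerH M g0 v"
      unfolding z_def using g0L x1L vL by simp
    have zx0: "(\<lambda>x. z x - x0 x) = (\<lambda>x. u x - s *\<^sub>R v x)" unfolding z_def u_def by auto
    have d1: "(distH M x1 x0)^2 = innerH M u u" unfolding distH_sq u_def by simp
    have d2: "(distH M z x0)^2 = innerH M u u - 2 * s * innerH M u v + s^2 * N"
      unfolding distH_sq zx0 N_def using uL vL by (simp add: innerH_commute[of M v u] power2_eq_square algebra_simps)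
    have Nexp: "N = innerH M g1 v / 2 + innerH M g0 v / 2 + innerH M u v / \<tau>"
      unfolding N_def using vexp[OF vL] by (simp add: innerH_commute)
    have spl: "(innerH M u u - 2 * s * innerH M u v + s^2 * N) / (2 * \<tau>) = innerH M u u / (2 * \<tau>) + (- 2 * s * innerH M u v + s^2 * N) / (2 * \<tau>)"
      using \<tau> by (simp add: field_simps)
    have "0 \<le> (F z - F x1) / 2 - s * innerH M g0 v / 2 + (- 2 * s * innerH M u v + s^2 * N) / (2 * \<tau>)"
      using mn unfolding gz d1 d2 spl by (simp add: field_simps)
    also have "\<dots> \<le> (- s * innerH M g1 v + s * N) / 2 - s * innerH M g0 v / 2 + (- 2 * s * innerH M u v + s^2 * N) / (2 * \<tau>)"
      using Fz by simp
    also have "\<dots> = s * N / 2 - s * (innerH M g1 v / 2 + innerH M g0 v / 2 + innerH M u v / \<tau>) + s^2 * N / (2 * \<tau>)"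
      using \<tau> by (simp add: field_simps power2_eq_square)
    also have "\<dots> = s * N * (s - \<tau>) / (2 * \<tau>)"
      unfolding Nexp[symmetric] using \<tau> by (simp add: field_simps power2_eq_square)
    finally have "0 \<le> s * N * (s - \<tau>) / (2 * \<tau>)" .
    moreover have "s * N * (s - \<tau>) < 0" using s0 Np \<tau> by (simp add: mult_pos_neg)
    ultimately show False using \<tau> divide_neg_pos[of "s * N * (s - \<tau>)" "2 * \<tau>"] by linarith
  qed
  have vw: "innerH M v w = 0"
  proof -
    define p where "p = innerH M v w"
    define q where "q = innerH M w w"
    define r where "r = - p / (q + 1)"
    have "0 \<le> innerH M (\<lambda>x. v x + r *\<^sub>R w x) (\<lambda>x. v x + r *\<^sub>R w x)" by (rule innerH_self_nonneg)
    also have "\<dots> = N + 2 * r * p + r^2 * q"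
      unfolding N_def p_def q_def using vL wL by (simp add: innerH_commute[of M w v] power2_eq_square algebra_simps)
    finally have "0 \<le> 2 * r * p + r^2 * q" using NZ by simp
    then show ?thesis using quad_zero[of q r p] innerH_self_nonneg[of M w] unfolding p_def q_def r_def by simp
  qed
  have "innerH M g1 w / 2 + innerH M g0 w / 2 + (innerH M x1 w - innerH M x0 w) / \<tau> = 0"
    using vw vexp[OF wL] unfolding u_def using x1L x0L wL by simp
  then show ?thesis unfolding x1_def x0_def g1_def g0_def using \<tau> by (simp add: field_simps)
qed


lemma evi_alg:
  fixes t Fxi F0 F1 xixi x1xi x0xi x1x1 x0x1 x0x0 g1xi g0xi g1x1 g0x1 g1x0 g0x0 g11 g01 g00 :: real
  assumes t: "t > 0"
    and e_xi: "x1xi - x0xi = -(t/2)*(g1xi + g0xi)"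
    and e_x1: "x1x1 - x0x1 = -(t/2)*(g1x1 + g0x1)"
    and e_x0: "x0x1 - x0x0 = -(t/2)*(g1x0 + g0x0)"
    and e_g1: "g1x1 - g1x0 = -(t/2)*(g11 + g01)"
    and e_g0: "g0x1 - g0x0 = -(t/2)*(g01 + g00)"
    and c1: "F1 + g1xi - g1x1 \<le> Fxi" and c0: "F0 + g0xi - g0x0 \<le> Fxi"
  shows "(xixi - 2*x1xi + x1x1) - (xixi - 2*x0xi + x0x0) \<le> t*(2*Fxi - F0 - F1) - t^2/4*(g11 - g00)"
proof -
  have g1x0: "g1x0 = g1x1 + (t/2)*(g11 + g01)" using e_g1 by simp
  have g0x1: "g0x1 = g0x0 - (t/2)*(g01 + g00)" using e_g0 by simp
  have "(xixi - 2*x1xi + x1x1) - (xixi - 2*x0xi + x0x0) = (x1x1 - x0x1) + (x0x1 - x0x0) - 2*(x1xi - x0xi)" by simp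
  also have "\<dots> = -(t/2)*(g1x1 + g0x1) - (t/2)*(g1x0 + g0x0) + t*(g1xi + g0xi)"
    unfolding e_xi e_x1 e_x0 by simp
  also have "\<dots> = t*((g1xi - g1x1) + (g0xi - g0x0)) - t^2/4*(g11 - g00)"
    unfolding g1x0 g0x1 by (simp add: field_simps power2_eq_square)
  also have "\<dots> \<le> t*((Fxi - F1) + (Fxi - F0)) - t^2/4*(g11 - g00)"
    using c1 c0 t by (intro diff_right_mono mult_left_mono) auto
  also have "\<dots> = t*(2*Fxi - F0 - F1) - t^2/4*(g11 - g00)" by (simp add: algebra_simps)
  finally show ?thesis .
qed

lemma mono_alg:
  fixes t F0 F1 g1x1 g0x1 g1x0 g0x0 g11 g01 g00 :: real
  assumes t: "t > 0"
    and e_g1: "g1x1 - g1x0 = -(t/2)*(g11 + g01)"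
    and e_g0: "g0x1 - g0x0 = -(t/2)*(g01 + g00)"
    and c10: "F1 + g1x0 - g1x1 \<le> F0" and c01: "F0 + g0x1 - g0x0 \<le> F1"
    and pos: "0 \<le> g00 - 2*g01 + g11"
  shows "g11 \<le> g00" and "F0 - F1 \<le> t * g00"
proof -
  have "0 \<ge> (g1x0 - g1x1) + (g0x1 - g0x0)" using c10 c01 by linarith
  also have "(g1x0 - g1x1) + (g0x1 - g0x0) = (t/2)*(g11 - g00)" using e_g1 e_g0 by (simp add: field_simps; linarith)
  finally have "(t/2)*(g11 - g00) \<le> 0" .
  then show "g11 \<le> g00" using t by (simp add: mult_le_0_iff)
  have "F0 - F1 \<le> g0x0 - g0x1" using c01 by linarith
  also have "\<dots> = (t/2)*(g01 + g00)" using e_g0 by simp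
  also have "\<dots> \<le> (t/2)*(2*g00)" using pos \<open>g11 \<le> g00\<close> t by (intro mult_left_mono) auto
  finally show "F0 - F1 \<le> t * g00" by simp
qed

lemma scheme_evi:
  assumes fg: "frechet_gradH M F G" and cv: "lambda_convexH M lam F" and lam: "lam \<ge> 0"
    and ts: "trap_scheme M F G \<tau> X" and \<tau>: "\<tau> > 0" and xi: "\<xi> \<in> L2H M"
  shows "(distH M \<xi> (X (Suc n)))^2 - (distH M \<xi> (X n))^2
     \<le> \<tau>*(2*F \<xi> - F (X n) - F (X (Suc n))) - \<tau>^2/4*(innerH M (G (X (Suc n))) (G (X (Suc n))) - innerH M (G (X n)) (G (X n)))"
proof -
  have x1L: "X (Suc n) \<in> L2H M" and x0L: "X n \<in> L2H M" using ts unfolding trap_scheme_def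
    by (metis not0_implies_Suc)+
  have g1L: "G (X (Suc n)) \<in> L2H M" and g0L: "G (X n) \<in> L2H M" using fg x1L x0L frechet_L2H by auto
  note el = EL[OF fg ts \<tau>, of _ n]
  have d1: "(distH M \<xi> (X (Suc n)))^2 = innerH M \<xi> \<xi> - 2 * innerH M (X (Suc n)) \<xi> + innerH M (X (Suc n)) (X (Suc n))"
    unfolding distH_sq using xi x1L by (simp add: innerH_commute[of M \<xi> "X (Suc n)"])
  have d0: "(distH M \<xi> (X n))^2 = innerH M \<xi> \<xi> - 2 * innerH M (X n) \<xi> + innerH M (X n) (X n)"
    unfolding distH_sq using xi x0L by (simp add: innerH_commute[of M \<xi> "X n"])
  show ?thesis unfolding d1 d0
  proof (rule evi_alg[OF \<tau>])
    show "innerH M (X (Suc n)) \<xi> - innerH M (X n) \<xi> = -(\<tau>/2)*(innerH M (G (X (Suc n))) \<xi> + innerH M (G (X n)) \<xi>)"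
      using el[OF xi] .
    show "innerH M (X (Suc n)) (X (Suc n)) - innerH M (X n) (X (Suc n)) = -(\<tau>/2)*(innerH M (G (X (Suc n))) (X (Suc n)) + innerH M (G (X n)) (X (Suc n)))"
      using el[OF x1L] .
    show "innerH M (X n) (X (Suc n)) - innerH M (X n) (X n) = -(\<tau>/2)*(innerH M (G (X (Suc n))) (X n) + innerH M (G (X n)) (X n))"
      using el[OF x0L] by (simp add: innerH_commute[of M "X n" "X (Suc n)"])
    show "innerH M (G (X (Suc n))) (X (Suc n)) - innerH M (G (X (Suc n))) (X n) = -(\<tau>/2)*(innerH M (G (X (Suc n))) (G (X (Suc n))) + innerH M (G (X n)) (G (X (Suc n))))"
      using el[OF g1L] by (simp add: innerH_commute[of M "X n" "G (X (Suc n))"] innerH_commute[of M "X (Suc n)" "G (X (Suc n))"])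
    show "innerH M (G (X n)) (X (Suc n)) - innerH M (G (X n)) (X n) = -(\<tau>/2)*(innerH M (G (X n)) (G (X (Suc n))) + innerH M (G (X n)) (G (X n)))"
      using el[OF g0L] by (simp add: innerH_commute[of M "X n" "G (X n)"] innerH_commute[of M "X (Suc n)" "G (X n)"] innerH_commute[of M "G (X (Suc n))" "G (X n)"])
    show "F (X (Suc n)) + innerH M (G (X (Suc n))) \<xi> - innerH M (G (X (Suc n))) (X (Suc n)) \<le> F \<xi>"
      by (rule grad_ineq[OF fg cv lam x1L xi])
    show "F (X n) + innerH M (G (X n)) \<xi> - innerH M (G (X n)) (X n) \<le> F \<xi>"
      by (rule grad_ineq[OF fg cv lam x0L xi])
  qed
qed

lemma scheme_mono:
  assumes fg: "frechet_gradH M F G" and cv: "lambda_convexH M lam F" and lam: "lam \<ge> 0"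
    and ts: "trap_scheme M F G \<tau> X" and \<tau>: "\<tau> > 0"
  shows "innerH M (G (X (Suc n))) (G (X (Suc n))) \<le> innerH M (G (X n)) (G (X n))"
    and "F (X n) - F (X (Suc n)) \<le> \<tau> * innerH M (G (X n)) (G (X n))"
proof -
  have x1L: "X (Suc n) \<in> L2H M" and x0L: "X n \<in> L2H M" using ts unfolding trap_scheme_def
    by (metis not0_implies_Suc)+
  have g1L: "G (X (Suc n)) \<in> L2H M" and g0L: "G (X n) \<in> L2H M" using fg x1L x0L frechet_L2H by auto
  note el = EL[OF fg ts \<tau>, of _ n]
  have e1: "innerH M (G (X (Suc n))) (X (Suc n)) - innerH M (G (X (Suc n))) (X n) = -(\<tau>/2)*(innerH M (G (X (Suc n))) (G (X (Suc n))) + innerH M (G (X n)) (G (X (Suc n))))"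
      using el[OF g1L] by (simp add: innerH_commute[of M "X n" "G (X (Suc n))"] innerH_commute[of M "X (Suc n)" "G (X (Suc n))"])
  have e0: "innerH M (G (X n)) (X (Suc n)) - innerH M (G (X n)) (X n) = -(\<tau>/2)*(innerH M (G (X n)) (G (X (Suc n))) + innerH M (G (X n)) (G (X n)))"
      using el[OF g0L] by (simp add: innerH_commute[of M "X n" "G (X n)"] innerH_commute[of M "X (Suc n)" "G (X n)"] innerH_commute[of M "G (X (Suc n))" "G (X n)"])
  have c10: "F (X (Suc n)) + innerH M (G (X (Suc n))) (X n) - innerH M (G (X (Suc n))) (X (Suc n)) \<le> F (X n)"
    by (rule grad_ineq[OF fg cv lam x1L x0L])
  have c01: "F (X n) + innerH M (G (X n)) (X (Suc n)) - innerH M (G (X n)) (X n) \<le> F (X (Suc n))"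
    by (rule grad_ineq[OF fg cv lam x0L x1L])
  have "0 \<le> innerH M (\<lambda>x. G (X n) x - G (X (Suc n)) x) (\<lambda>x. G (X n) x - G (X (Suc n)) x)"
    by (rule innerH_self_nonneg)
  also have "\<dots> = innerH M (G (X n)) (G (X n)) - 2 * innerH M (G (X n)) (G (X (Suc n))) + innerH M (G (X (Suc n))) (G (X (Suc n)))"
    using g0L g1L by (simp add: innerH_commute[of M "G (X (Suc n))" "G (X n)"])
  finally have pos: "0 \<le> \<dots>" .
  note m = mono_alg[OF \<tau> e1 e0 c10 c01 pos]
  show "innerH M (G (X (Suc n))) (G (X (Suc n))) \<le> innerH M (G (X n)) (G (X n))" by (rule m(1))
  show "F (X n) - F (X (Suc n)) \<le> \<tau> * innerH M (G (X n)) (G (X n))" by (rule m(2))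
qed

lemma scheme_mono0:
  assumes fg: "frechet_gradH M F G" and cv: "lambda_convexH M lam F" and lam: "lam \<ge> 0"
    and ts: "trap_scheme M F G \<tau> X" and \<tau>: "\<tau> > 0"
  shows "innerH M (G (X n)) (G (X n)) \<le> innerH M (G (X 0)) (G (X 0))"
proof (induction n)
  case 0 then show ?case by simp
next
  case (Suc n) then show ?case using scheme_mono(1)[OF assms, of n] by linarith
qed

theorem mainTheorem12:
  fixes \<rho>0 :: "(real ^ 'd) measure"
    and \<phi> :: "(real ^ 'd) measure \<Rightarrow> real"
    and G :: "((real ^ 'd) \<Rightarrow> (real ^ 'd)) \<Rightarrow> ((real ^ 'd) \<Rightarrow> (real ^ 'd))"
    and lam \<tau> \<eta> t :: real
    and X Y :: "nat \<Rightarrow> (real ^ 'd) \<Rightarrow> (real ^ 'd)"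
  assumes "\<rho>0 \<in> P2"
    and "frechet_gradH \<rho>0 (lift \<phi> \<rho>0) G"
    and "lambda_convexH \<rho>0 lam (lift \<phi> \<rho>0)"
    and "lam \<ge> 0"
    and "bdd_below (lift \<phi> \<rho>0 ` L2H \<rho>0)"
    and "\<tau> > 0" and "\<eta> > 0"
    and "lam / 2 + 1 / \<tau> > 0" and "lam / 2 + 1 / \<eta> > 0"
    and "trap_scheme \<rho>0 (lift \<phi> \<rho>0) G \<tau> X"
    and "trap_scheme \<rho>0 (lift \<phi> \<rho>0) G \<eta> Y"
    and "t \<ge> 0"
  shows "d2_two \<rho>0 X \<tau> Y \<eta> t
           \<le> (distH \<rho>0 (X 0) (Y 0))^2
              + 7 / 4 * (\<tau>^2 * (normH \<rho>0 (G (X 0)))^2 + \<eta>^2 * (normH \<rho>0 (G (Y 0)))^2)"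
proof -
  define M where "M = \<rho>0"
  define F where "F = lift \<phi> \<rho>0"
  note fg = assms(2)[folded M_def F_def] and cv = assms(3)[folded M_def F_def] and lam = assms(4)
  note \<tau> = assms(6) and \<eta> = assms(7)
  note tsX = assms(10)[folded M_def F_def] and tsY = assms(11)[folded M_def F_def]
  define c where "c = (\<lambda>n m. (distH M (Y m) (X n))^2)"
  define FX where "FX = (\<lambda>n. F (X n))"
  define FY where "FY = (\<lambda>n. F (Y n))"
  define GX where "GX = (\<lambda>n. innerH M (G (X n)) (G (X n)))"
  define GY where "GY = (\<lambda>n. innerH M (G (Y n)) (G (Y n)))"
  have YL: "\<And>m. Y m \<in> L2H M" and XL: "\<And>n. X n \<in> L2H M" using tsX tsY unfolding trap_scheme_def
    by (metis not0_implies_Suc)+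
  interpret chainctx \<tau> \<eta> c FX FY GX GY
  proof
    show "\<tau> > 0" "\<eta> > 0" using \<tau> \<eta> .
    fix n m
    show "c (Suc n) m - c n m \<le> \<tau>*(2*FY m - FX n - FX (Suc n)) - \<tau>^2/4*(GX (Suc n) - GX n)"
      unfolding c_def FX_def FY_def GX_def by (rule scheme_evi[OF fg cv lam tsX \<tau> YL])
    show "c n (Suc m) - c n m \<le> \<eta>*(2*FX n - FY m - FY (Suc m)) - \<eta>^2/4*(GY (Suc m) - GY m)"
      unfolding c_def FX_def FY_def GY_def using scheme_evi[OF fg cv lam tsY \<eta> XL, of n m]
      by (simp add: distH_commute[of M "X n"])
  qed
  define n where "n = nat \<lfloor>t/\<tau>\<rfloor>"
  define m where "m = nat \<lfloor>t/\<eta>\<rfloor>"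
  define a where "a = (t - real n * \<tau>)/\<tau>"
  define b where "b = (t - real m * \<eta>)/\<eta>"
  have seg: "Seg n m t" unfolding n_def m_def by (rule Seg_floor[OF assms(12)])
  have ab: "0 \<le> a" "a \<le> 1" "0 \<le> b" "b \<le> 1" using seg \<tau> \<eta> unfolding Seg_def a_def b_def
    by (auto simp: field_simps)
  have P: "Phi n m t \<le> c 0 0" by (rule Phi_le[OF seg])
  have GXn: "\<And>k. 0 \<le> GX k" "\<And>k. GX k \<le> GX 0" unfolding GX_def
    using innerH_self_nonneg scheme_mono0[OF fg cv lam tsX \<tau>] by auto
  have GYn: "\<And>k. 0 \<le> GY k" "\<And>k. GY k \<le> GY 0" unfolding GY_def
    using innerH_self_nonneg scheme_mono0[OF fg cv lam tsY \<eta>] by auto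
  have PX: "Pq \<tau> (FX n) (FX (Suc n)) (GX 0) (GX n) (GX (Suc n)) a \<le> \<tau>^2/2 * GX 0"
    using \<tau> ab GXn scheme_mono(2)[OF fg cv lam tsX \<tau>, of n] unfolding FX_def GX_def
    by (intro Pq_bound) auto
  have PY: "Pq \<eta> (FY m) (FY (Suc m)) (GY 0) (GY m) (GY (Suc m)) b \<le> \<eta>^2/2 * GY 0"
    using \<eta> ab GYn scheme_mono(2)[OF fg cv lam tsY \<eta>, of m] unfolding FY_def GY_def
    by (intro Pq_bound) auto
  have D: "d2_two \<rho>0 X \<tau> Y \<eta> t = Dq (c n m) (c (Suc n) m) (c n (Suc m)) (c (Suc n) (Suc m)) a b"
    unfolding d2_two_def d2_def lowerX_def upperX_def ell_def stepidx_def Dq_def c_def M_def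
      a_def b_def n_def m_def by simp
  have "d2_two \<rho>0 X \<tau> Y \<eta> t \<le> c 0 0 + \<tau>^2/2 * GX 0 + \<eta>^2/2 * GY 0"
    using P PX PY unfolding D Phi_def a_def b_def by linarith
  also have "\<dots> \<le> c 0 0 + 7/4 * (\<tau>^2 * GX 0 + \<eta>^2 * GY 0)"
  proof -
    have "0 \<le> \<tau>^2 * GX 0" "0 \<le> \<eta>^2 * GY 0" using GXn(1)[of 0] GYn(1)[of 0] by simp_all
    moreover have "c 0 0 + \<tau>^2/2 * GX 0 + \<eta>^2/2 * GY 0 = c 0 0 + 1/2 * (\<tau>^2 * GX 0) + 1/2 * (\<eta>^2 * GY 0)" by simp
    moreover have "7/4 * (\<tau>^2 * GX 0 + \<eta>^2 * GY 0) = 7/4 * (\<tau>^2 * GX 0) + 7/4 * (\<eta>^2 * GY 0)"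
      by (rule distrib_left)
    ultimately show ?thesis by linarith
  qed
  also have "\<dots> = (distH \<rho>0 (X 0) (Y 0))^2
              + 7 / 4 * (\<tau>^2 * (normH \<rho>0 (G (X 0)))^2 + \<eta>^2 * (normH \<rho>0 (G (Y 0)))^2)"
    unfolding c_def GX_def GY_def M_def normH_sq by (simp add: distH_commute)
  finally show ?thesis .
qed

end
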